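(* Let $\{x_i\}_{i\in\mathcal N_+}$ and $\{x_j\}_{j\in\mathcal N_-}$ be two finite nonempty families of vectors in $\mathbb R^s$ (indexed by disjoint index sets $\mathcal N_+$, $\mathcal N_-$), and define the centroids $x_p^c=\frac{1}{|\mathcal N_+|}\sum_{i\in\mathcal N_+}x_i$ and $x_n^c=\frac{1}{|\mathcal N_-|}\sum_{j\in\mathcal N_-}x_j$, the class-imbalance ratio $r_c=\frac{|\mathcal N_+|}{|\mathcal N_-|}$, and the scale-class-imbalance ratio $$r_{sc}=r_c\sqrt{\frac{\|x_p^c\|^2+1}{\|x_n^c\|^2+1}}.$$ Assume the mean-zero normalization $\sum_{i\in\mathcal N_+}x_i+\sum_{j\in\mathcal N_-}x_j=0$, and that $x_p^c\neq 0$ and $x_n^c\neq 0$. Then: if $r_{sc}=1$, we have $r_c=1$; and if $r_{sc}\neq 1$, we have $|r_{sc}-1|<|r_c-1|$.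
   Context: $\|\cdot\|$ denotes the Euclidean norm on $\mathbb R^s$ and $|\cdot|$ the cardinality of a finite set. *)

theory Defs
  imports "HOL-Analysis.Analysis"
begin

definition centroid :: "('i \<Rightarrow> real^'s) \<Rightarrow> 'i set \<Rightarrow> real^'s" where
  "centroid x N = (1 / real (card N)) *\<^sub>R (\<Sum>i\<in>N. x i)"

definition class_imb_ratio :: "'i set \<Rightarrow> 'i set \<Rightarrow> real" where
  "class_imb_ratio Np Nn = real (card Np) / real (card Nn)"

definition scale_class_imb_ratio :: "('i \<Rightarrow> real^'s) \<Rightarrow> 'i set \<Rightarrow> 'i set \<Rightarrow> real" where
  "scale_class_imb_ratio x Np Nn =
     class_imb_ratio Np Nn *
     sqrt (((norm (centroid x Np))\<^sup>2 + 1) / ((norm (centroid x Nn))\<^sup>2 + 1))"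

end

theory Submission
  imports Defs
begin

lemma real_part:
  fixes a p n :: real
  assumes a: "a > 0" and p: "p > 0" and n: "n > 0"
  defines "R \<equiv> p / n * sqrt (((a/p)\<^sup>2 + 1) / ((a/n)\<^sup>2 + 1))"
  shows "(R = 1 \<longrightarrow> p / n = 1) \<and> (R \<noteq> 1 \<longrightarrow> \<bar>R - 1\<bar> < \<bar>p / n - 1\<bar>)"
proof -
  define q where "q = (a\<^sup>2 + p\<^sup>2) / (a\<^sup>2 + n\<^sup>2)"
  have qpos: "q > 0" unfolding q_def using a by (intro divide_pos_pos add_pos_nonneg) auto
  have e: "((a/p)\<^sup>2 + 1) / ((a/n)\<^sup>2 + 1) = q * (n/p)\<^sup>2"
    unfolding q_def using p n a by (simp add: field_simps power2_eq_square)
  have "R = p / n * (sqrt q * (n/p))"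
    unfolding R_def e using p n by (simp add: real_sqrt_mult)
  hence R: "R = sqrt q" using p n by simp
  consider "p < n" | "p = n" | "p > n" by linarith
  thus ?thesis
  proof cases
    case 1
    have q1: "q < 1" unfolding q_def using 1 p a by (simp add: power_strict_mono add_pos_pos)
    have pp: "p*p < n*n" using 1 p by (intro mult_strict_mono) auto
    have "(p/n)\<^sup>2 < q" unfolding q_def using 1 p n a pp
      by (simp add: field_simps power2_eq_square mult_strict_left_mono add_pos_pos)
    hence "sqrt ((p/n)\<^sup>2) < sqrt q" by (simp only: real_sqrt_less_iff)
    hence "p/n < R" using R p n by simp
    moreover have "R < 1" using R q1 by simp
    moreover have "p/n < 1" using 1 n by simp
    ultimately show ?thesis by auto
  next
    case 2
    thus ?thesis using R q_def n by simp
  next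
    case 3
    have q1: "q > 1" unfolding q_def using 3 n a by (simp add: power_strict_mono add_pos_pos)
    have pp: "n*n < p*p" using 3 n by (intro mult_strict_mono) auto
    have "(p/n)\<^sup>2 > q" unfolding q_def using 3 p n a pp
      by (simp add: field_simps power2_eq_square mult_strict_left_mono add_pos_pos)
    hence "sqrt ((p/n)\<^sup>2) > sqrt q" by (simp only: real_sqrt_less_iff)
    hence "p/n > R" using R p n by simp
    moreover have "R > 1" using R q1 by simp
    ultimately show ?thesis by auto
  qed
qed

theorem theorem1:
  fixes x :: "'i \<Rightarrow> real^'s" and Np Nn :: "'i set"
  assumes "finite Np" "finite Nn" "Np \<noteq> {}" "Nn \<noteq> {}" "Np \<inter> Nn = {}"
    and "(\<Sum>i\<in>Np. x i) + (\<Sum>j\<in>Nn. x j) = 0"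
    and "centroid x Np \<noteq> 0" "centroid x Nn \<noteq> 0"
  shows "(scale_class_imb_ratio x Np Nn = 1 \<longrightarrow> class_imb_ratio Np Nn = 1) \<and>
         (scale_class_imb_ratio x Np Nn \<noteq> 1 \<longrightarrow>
            \<bar>scale_class_imb_ratio x Np Nn - 1\<bar> < \<bar>class_imb_ratio Np Nn - 1\<bar>)"
proof -
  define S where "S = (\<Sum>i\<in>Np. x i)"
  define p where "p = real (card Np)"
  define n where "n = real (card Nn)"
  have p: "p > 0" unfolding p_def using assms by (simp add: card_gt_0_iff)
  have n: "n > 0" unfolding n_def using assms by (simp add: card_gt_0_iff)
  have Sn: "(\<Sum>j\<in>Nn. x j) = - S" using assms(6) unfolding S_def by (simp add: eq_neg_iff_add_eq_0 add.commute)
  have cp: "centroid x Np = (1/p) *\<^sub>R S" unfolding centroid_def p_def S_def by simp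
  have cn: "centroid x Nn = (1/n) *\<^sub>R (- S)" unfolding centroid_def n_def Sn by simp
  have S0: "S \<noteq> 0" using assms(7) cp by auto
  define a where "a = norm S"
  have a: "a > 0" unfolding a_def using S0 by simp
  have np: "norm (centroid x Np) = a / p" unfolding cp a_def using p by simp
  have nn: "norm (centroid x Nn) = a / n" unfolding cn a_def using n by simp
  have "scale_class_imb_ratio x Np Nn = p / n * sqrt (((a/p)\<^sup>2 + 1) / ((a/n)\<^sup>2 + 1))"
    unfolding scale_class_imb_ratio_def class_imb_ratio_def np nn p_def n_def by simp
  moreover have "class_imb_ratio Np Nn = p / n" unfolding class_imb_ratio_def p_def n_def by simp
  ultimately show ?thesis using real_part[OF a p n] by simp
qed

end
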